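(* Let $m\ge3$. The matrices $\mathcal{M}^{t,p}_{i,j}$ ($(i,j,t,p)\in\mathcal{I}_{(m,m)}$), $\mathcal{R}^{t,p}_{i,j}$ ($(i,j,t,p)\in\mathcal{I}_{(m,m+1)}$), $\mathcal{L}^{t,p}_{i,j}$ ($(i,j,t,p)\in\mathcal{I}_{(m+1,m)}$) and $\mathcal{F}^{t,p}_{i,j}$ ($(i,j,t,p)\in\mathcal{I}_{(m+1,m+1)}$) form a basis of the Terwilliger algebra $T=T(x_0)$ of $2.O_{m+1}$.
   Context: $S=\{1,\dots,2m+1\}$, $X=\binom{S}{m}\cup\binom{S}{m+1}$; the doubled Odd graph $2.O_{m+1}$ has vertex set $X$, two vertices adjacent iff one is a proper subset of the other, with distance $\partial$. $x_0=\{1,\dots,m\}$. $T$ is the subalgebra of complex $X\times X$ matrices generated by the adjacency matrix $A_1$ and the diagonal matrices $E^*_i$ ($0\le i\le 2m+1$) with $(y,y)$-entry $1$ iff $\partial(x_0,y)=i$. For $y,z\subseteq S$, $\varrho(y,z)=(|x_0\cap y|,|x_0\cap z|,|y\cap z|,|x_0\cap y\cap z|)$; for $a,b\in\{m,m+1\}$, $\mathcal{I}_{(a,b)}=\{\varrho(y,z):y\in\binom{S}{a},z\in\binom{S}{b}\}$ and $X^{(i,j,t,p)}_{(a,b)}=\{(y,z)\in\binom{S}{a}\times\binom{S}{b}:\varrho(y,z)=(i,j,t,p)\}$. The matrices $\mathcal{M}^{t,p}_{i,j}$, $\mathcal{R}^{t,p}_{i,j}$, $\mathcal{L}^{t,p}_{i,j}$,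 $\mathcal{F}^{t,p}_{i,j}$ are the $X\times X$ $0/1$ matrices whose $(y,z)$-entry is $1$ iff $(y,z)$ lies in $X^{(i,j,t,p)}_{(m,m)}$, $X^{(i,j,t,p)}_{(m,m+1)}$, $X^{(i,j,t,p)}_{(m+1,m)}$, $X^{(i,j,t,p)}_{(m+1,m+1)}$ respectively. *)

theory Defs
  imports Complex_Main "HOL-Library.Function_Algebras"
begin

text \<open>Matrices indexed by X x X are represented as functions
  nat set => nat set => complex (entries outside X x X are zero for all
  matrices considered).\<close>

type_synonym cmat = "nat set \<Rightarrow> nat set \<Rightarrow> complex"

definition Sset :: "nat \<Rightarrow> nat set" where
  "Sset m = {1..2*m+1}"

definition Xset :: "nat \<Rightarrow> nat set set" where
  "Xset m = {y. y \<subseteq> Sset m \<and> (card y = m \<or> card y = m + 1)}"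

definition x0 :: "nat \<Rightarrow> nat set" where
  "x0 m = {1..m}"

definition adj :: "nat \<Rightarrow> nat set \<Rightarrow> nat set \<Rightarrow> bool" where
  "adj m y z \<longleftrightarrow> y \<in> Xset m \<and> z \<in> Xset m \<and> (y \<subset> z \<or> z \<subset> y)"

definition gdist :: "nat \<Rightarrow> nat set \<Rightarrow> nat set \<Rightarrow> nat" where
  "gdist m y z = (LEAST n. (y, z) \<in> ({(u, v). adj m u v} ^^ n))"

definition cscale :: "complex \<Rightarrow> cmat \<Rightarrow> cmat" where
  "cscale c A = (\<lambda>y z. c * A y z)"

definition mmult :: "nat \<Rightarrow> cmat \<Rightarrow> cmat \<Rightarrow> cmat" where
  "mmult m A B = (\<lambda>y z. \<Sum>w\<in>Xset m. A y w * B w z)"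

definition idmat :: "nat \<Rightarrow> cmat" where
  "idmat m = (\<lambda>y z. if y \<in> Xset m \<and> y = z then 1 else 0)"

definition A1 :: "nat \<Rightarrow> cmat" where
  "A1 m = (\<lambda>y z. if adj m y z then 1 else 0)"

definition Estar :: "nat \<Rightarrow> nat \<Rightarrow> cmat" where
  "Estar m i = (\<lambda>y z. if y \<in> Xset m \<and> y = z \<and> gdist m (x0 m) y = i then 1 else 0)"

inductive_set Talg :: "nat \<Rightarrow> cmat set" for m where
  gen_id: "idmat m \<in> Talg m"
| gen_A: "A1 m \<in> Talg m"
| gen_E: "i \<le> 2*m+1 \<Longrightarrow> Estar m i \<in> Talg m"
| add: "A \<in> Talg m \<Longrightarrow> B \<in> Talg m \<Longrightarrow> A + B \<in> Talg m"
| scale: "A \<in> Talg m \<Longrightarrow> cscale c A \<in> Talg m"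
| mult: "A \<in> Talg m \<Longrightarrow> B \<in> Talg m \<Longrightarrow> mmult m A B \<in> Talg m"

definition rho :: "nat \<Rightarrow> nat set \<Rightarrow> nat set \<Rightarrow> nat \<times> nat \<times> nat \<times> nat" where
  "rho m y z = (card (x0 m \<inter> y), card (x0 m \<inter> z), card (y \<inter> z), card (x0 m \<inter> y \<inter> z))"

definition ksub :: "nat \<Rightarrow> nat \<Rightarrow> nat set set" where
  "ksub m a = {y. y \<subseteq> Sset m \<and> card y = a}"

definition Iset :: "nat \<Rightarrow> nat \<Rightarrow> nat \<Rightarrow> (nat \<times> nat \<times> nat \<times> nat) set" where
  "Iset m a b = {rho m y z | y z. y \<in> ksub m a \<and> z \<in> ksub m b}"

definition Xrel :: "nat \<Rightarrow> nat \<Rightarrow> nat \<Rightarrow> nat \<times> nat \<times> nat \<times> nat \<Rightarrow> (nat set \<times> nat set) set" where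
  "Xrel m a b q = {(y, z). y \<in> ksub m a \<and> z \<in> ksub m b \<and> rho m y z = q}"

definition blockmat :: "nat \<Rightarrow> nat \<Rightarrow> nat \<Rightarrow> nat \<times> nat \<times> nat \<times> nat \<Rightarrow> cmat" where
  "blockmat m a b q = (\<lambda>y z. if (y, z) \<in> Xrel m a b q then 1 else 0)"

definition Mmat :: "nat \<Rightarrow> nat \<times> nat \<times> nat \<times> nat \<Rightarrow> cmat" where
  "Mmat m q = blockmat m m m q"
definition Rmat :: "nat \<Rightarrow> nat \<times> nat \<times> nat \<times> nat \<Rightarrow> cmat" where
  "Rmat m q = blockmat m m (m+1) q"
definition Lmat :: "nat \<Rightarrow> nat \<times> nat \<times> nat \<times> nat \<Rightarrow> cmat" where
  "Lmat m q = blockmat m (m+1) m q"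
definition Fmat :: "nat \<Rightarrow> nat \<times> nat \<times> nat \<times> nat \<Rightarrow> cmat" where
  "Fmat m q = blockmat m (m+1) (m+1) q"

definition bfam :: "nat \<Rightarrow> nat \<times> (nat \<times> nat \<times> nat \<times> nat) \<Rightarrow> cmat" where
  "bfam m kq = (case kq of (k, q) \<Rightarrow>
     if k = 0 then Mmat m q else if k = 1 then Rmat m q else if k = 2 then Lmat m q else Fmat m q)"

definition bidx :: "nat \<Rightarrow> (nat \<times> (nat \<times> nat \<times> nat \<times> nat)) set" where
  "bidx m = ({0} \<times> Iset m m m) \<union> ({1} \<times> Iset m m (m+1))
          \<union> ({2} \<times> Iset m (m+1) m) \<union> ({3} \<times> Iset m (m+1) (m+1))"

end

theory Submission
  imports Defs
begin


lemma Xset_fin: "finite (Xset m)"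
proof -
  have "Xset m \<subseteq> Pow (Sset m)" by (auto simp: Xset_def)
  then show ?thesis by (rule finite_subset) (simp add: Sset_def)
qed

lemma S_fin[simp]: "finite (Sset m)" by (simp add: Sset_def)

lemma X_sub: "y \<in> Xset m \<Longrightarrow> y \<subseteq> Sset m" by (simp add: Xset_def)
lemma X_fin: "y \<in> Xset m \<Longrightarrow> finite y" using finite_subset[OF X_sub S_fin] .
lemma X_card: "y \<in> Xset m \<Longrightarrow> card y = m \<or> card y = m+1" by (simp add: Xset_def)

lemma x0_sub: "x0 m \<subseteq> Sset m" by (auto simp: x0_def Sset_def)
lemma x0_card[simp]: "card (x0 m) = m" by (simp add: x0_def)
lemma x0_fin[simp]: "finite (x0 m)" by (simp add: x0_def)
lemma x0_X: "x0 m \<in> Xset m" using x0_sub by (simp add: Xset_def)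
lemma S_card: "card (Sset m) = 2*m+1" by (simp add: Sset_def)

definition dd :: "nat set \<Rightarrow> nat set \<Rightarrow> nat" where
  "dd a b = card (a - b) + card (b - a)"

lemma dd_sym: "dd a b = dd b a" by (simp add: dd_def)

lemma dd_formula: "finite a \<Longrightarrow> finite b \<Longrightarrow> dd a b + 2 * card (a \<inter> b) = card a + card b"
  using card_Int_Diff[of a b] card_Int_Diff[of b a] by (simp add: dd_def Int_commute)

lemma dd_insert_in: "finite a \<Longrightarrow> finite w \<Longrightarrow> b \<notin> w \<Longrightarrow> b \<in> a \<Longrightarrow> dd a (insert b w) + 1 = dd a w"
proof -
  assume f: "finite a" "finite w" "b \<notin> w" "b \<in> a"
  have 1: "a - insert b w = (a - w) - {b}" by auto
  have 2: "insert b w - a = w - a" using f by auto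
  have "card ((a - w) - {b}) + 1 = card (a - w)" using f
    using card.remove[of "a - w" b] by simp
  then show ?thesis unfolding dd_def 1 2 by simp
qed

lemma dd_insert_out: "finite a \<Longrightarrow> finite w \<Longrightarrow> b \<notin> w \<Longrightarrow> b \<notin> a \<Longrightarrow> dd a (insert b w) = dd a w + 1"
proof -
  assume f: "finite a" "finite w" "b \<notin> w" "b \<notin> a"
  have 1: "a - insert b w = (a - w)" using f by auto
  have 2: "insert b w - a = insert b (w - a)" using f by auto
  show ?thesis unfolding dd_def 1 2 using f by simp
qed

lemma adj_cases:
  assumes "adj m u v"
  shows "(\<exists>b. b \<notin> u \<and> v = insert b u \<and> card u = m \<and> b \<in> Sset m)
       \<or> (\<exists>b. b \<in> u \<and> v = u - {b} \<and> card u = m + 1)"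
proof -
  have u: "u \<in> Xset m" and v: "v \<in> Xset m" and s: "u \<subset> v \<or> v \<subset> u"
    using assms by (auto simp: adj_def)
  have fu: "finite u" and fv: "finite v" using u v X_fin by auto
  show ?thesis
  proof (cases "u \<subset> v")
    case True
    then have "card u < card v" using fv psubset_card_mono by blast
    then have cu: "card u = m" and cv: "card v = m+1" using X_card[OF u] X_card[OF v] by auto
    have "card (v - u) = 1" using True cu cv card_Diff_subset[of u v] fu by auto
    then obtain b where b: "v - u = {b}" by (auto simp: card_Suc_eq)
    then have "v = insert b u" "b \<notin> u" using True by auto
    moreover have "b \<in> Sset m" using b X_sub[OF v] by auto
    ultimately show ?thesis using cu by blast
  next
    case False
    then have T: "v \<subset> u" using s by auto
    then have "card v < card u" using fu psubset_card_mono by blast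
    then have cu: "card u = m+1" and cv: "card v = m" using X_card[OF u] X_card[OF v] by auto
    have "card (u - v) = 1" using T cu cv card_Diff_subset[of v u] fv by auto
    then obtain b where b: "u - v = {b}" by (auto simp: card_Suc_eq)
    then have "v = u - {b}" "b \<in> u" using T by auto
    then show ?thesis using cu by blast
  qed
qed



lemma dd_remove_in: "finite a \<Longrightarrow> finite w \<Longrightarrow> b \<in> w \<Longrightarrow> b \<in> a \<Longrightarrow> dd a (w - {b}) = dd a w + 1"
  using dd_insert_in[of a "w - {b}" b] by (simp add: insert_absorb)

lemma dd_remove_out: "finite a \<Longrightarrow> finite w \<Longrightarrow> b \<in> w \<Longrightarrow> b \<notin> a \<Longrightarrow> dd a (w - {b}) + 1 = dd a w"
  using dd_insert_out[of a "w - {b}" b] by (simp add: insert_absorb)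

lemma adj_dd_le: "adj m w c \<Longrightarrow> finite a \<Longrightarrow> dd a c \<le> dd a w + 1 \<and> dd a w \<le> dd a c + 1"
proof -
  assume A: "adj m w c" "finite a"
  have fw: "finite w" using A(1) X_fin by (auto simp: adj_def)
  from adj_cases[OF A(1)] show ?thesis
  proof
    assume "\<exists>b. b \<notin> w \<and> c = insert b w \<and> card w = m \<and> b \<in> Sset m"
    then obtain b where "b \<notin> w" "c = insert b w" by blast
    then show ?thesis using dd_insert_in[of a w b] dd_insert_out[of a w b] A fw by (cases "b \<in> a") auto
  next
    assume "\<exists>b. b \<in> w \<and> c = w - {b} \<and> card w = m + 1"
    then obtain b where "b \<in> w" "c = w - {b}" by blast
    then show ?thesis using dd_remove_in[of a w b] dd_remove_out[of a w b] A fw by (cases "b \<in> a") auto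
  qed
qed

abbreviation E :: "nat \<Rightarrow> (nat set \<times> nat set) set" where
  "E m \<equiv> {(u, v). adj m u v}"

lemma relpow_dd: "(a, c) \<in> E m ^^ n \<Longrightarrow> finite a \<Longrightarrow> dd a c \<le> n"
proof (induction n arbitrary: c)
  case 0
  then show ?case by (simp add: dd_def)
next
  case (Suc n)
  from Suc.prems(1) obtain w where w: "(a, w) \<in> E m ^^ n" "adj m w c" by (auto elim: relpow_Suc_E)
  have "dd a w \<le> n" using Suc.IH w(1) Suc.prems(2) by blast
  then show ?case using adj_dd_le[OF w(2) Suc.prems(2)] by simp
qed

lemma dd_zero: "finite a \<Longrightarrow> finite b \<Longrightarrow> dd a b = 0 \<Longrightarrow> a = b"
  by (auto simp: dd_def)

lemma step_toward:
  assumes a: "a \<in> Xset m" and b: "b \<in> Xset m" and ne: "a \<noteq> b"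
  shows "\<exists>a'. adj m a a' \<and> dd b a' + 1 = dd b a"
proof -
  have fa: "finite a" and fb: "finite b" using a b X_fin by auto
  show ?thesis
  proof (cases "card a = m")
    case True
    have "\<not> b \<subseteq> a"
    proof
      assume "b \<subseteq> a"
      then have "card b \<le> card a" using fa card_mono by blast
      then have "card b = card a" using X_card[OF b] True by auto
      then show False using \<open>b \<subseteq> a\<close> fa card_subset_eq ne by metis
    qed
    then obtain c where c: "c \<in> b" "c \<notin> a" by blast
    have cS: "c \<in> Sset m" using c X_sub[OF b] by auto
    have "insert c a \<in> Xset m" using a cS c True fa by (auto simp: Xset_def)
    moreover have "a \<subset> insert c a" using c by auto
    ultimately have "adj m a (insert c a)" using a by (simp add: adj_def)
    moreover have "dd b (insert c a) + 1 = dd b a" using dd_insert_in[OF fb fa c(2) c(1)] .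
    ultimately show ?thesis by blast
  next
    case False
    then have ca: "card a = m + 1" using X_card[OF a] by auto
    have "\<not> a \<subseteq> b"
    proof
      assume "a \<subseteq> b"
      then have "card a \<le> card b" using fb card_mono by blast
      then have "card b = card a" using X_card[OF b] ca by auto
      then show False using \<open>a \<subseteq> b\<close> fb card_subset_eq ne by metis
    qed
    then obtain c where c: "c \<in> a" "c \<notin> b" by blast
    have "card (a - {c}) = m" using ca c by (simp add: card_Diff_singleton)
    then have "a - {c} \<in> Xset m" using X_sub[OF a] by (auto simp: Xset_def)
    moreover have "a - {c} \<subset> a" using c by auto
    ultimately have "adj m a (a - {c})" using a by (simp add: adj_def)
    moreover have "dd b (a - {c}) + 1 = dd b a" using dd_remove_out[OF fb fa c(1) c(2)] .
    ultimately show ?thesis by blast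
  qed
qed

lemma relpow_exists: "a \<in> Xset m \<Longrightarrow> b \<in> Xset m \<Longrightarrow> dd b a = n \<Longrightarrow> (a, b) \<in> E m ^^ n"
proof (induction n arbitrary: a)
  case 0
  then have "a = b" using dd_zero[of b a] X_fin by auto
  then show ?case by simp
next
  case (Suc n)
  then have "a \<noteq> b" by (auto simp: dd_def)
  then obtain a' where a': "adj m a a'" "dd b a' + 1 = dd b a" using step_toward Suc.prems by blast
  have "a' \<in> Xset m" using a'(1) by (simp add: adj_def)
  then have "(a', b) \<in> E m ^^ n" using Suc a' by auto
  then show ?case using a'(1) by (intro relpow_Suc_I2[of a a']) auto
qed

lemma gdist_dd: "a \<in> Xset m \<Longrightarrow> b \<in> Xset m \<Longrightarrow> gdist m a b = dd a b"
  unfolding gdist_def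
proof (rule Least_equality)
  assume "a \<in> Xset m" "b \<in> Xset m"
  then show "(a, b) \<in> E m ^^ dd a b" using relpow_exists dd_sym by metis
next
  fix n assume "a \<in> Xset m" "(a, b) \<in> E m ^^ n"
  then show "dd a b \<le> n" using relpow_dd X_fin by blast
qed

lemma Estar_dd: "Estar m i = (\<lambda>y z. if y \<in> Xset m \<and> y = z \<and> dd (x0 m) y = i then 1 else 0)"
  unfolding Estar_def using gdist_dd[OF x0_X] by (intro ext) auto



type_synonym kty = "nat \<times> nat \<times> (nat \<times> nat \<times> nat \<times> nat)"

definition key :: "nat \<Rightarrow> nat set \<Rightarrow> nat set \<Rightarrow> kty" where
  "key m y z = (card y, card z, rho m y z)"

definition BM :: "nat \<Rightarrow> kty \<Rightarrow> cmat" where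
  "BM m k = blockmat m (fst k) (fst (snd k)) (snd (snd k))"

definition invm :: "nat \<Rightarrow> cmat \<Rightarrow> bool" where
  "invm m M \<longleftrightarrow> (\<forall>y z. y \<notin> Xset m \<or> z \<notin> Xset m \<longrightarrow> M y z = 0) \<and>
     (\<forall>y z y' z'. y \<in> Xset m \<longrightarrow> z \<in> Xset m \<longrightarrow> y' \<in> Xset m \<longrightarrow> z' \<in> Xset m \<longrightarrow>
        key m y z = key m y' z' \<longrightarrow> M y z = M y' z')"

definition Kset :: "nat \<Rightarrow> kty set" where
  "Kset m = (\<lambda>(y, z). key m y z) ` (Xset m \<times> Xset m)"

definition rep :: "nat \<Rightarrow> kty \<Rightarrow> nat set \<times> nat set" where
  "rep m k = (SOME p. p \<in> Xset m \<times> Xset m \<and> key m (fst p) (snd p) = k)"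

lemma Kset_fin: "finite (Kset m)"
  unfolding Kset_def using Xset_fin by simp

lemma rep_prop: "k \<in> Kset m \<Longrightarrow> rep m k \<in> Xset m \<times> Xset m \<and> key m (fst (rep m k)) (snd (rep m k)) = k"
  unfolding rep_def Kset_def by (rule someI_ex) auto

lemma BM_key: "y \<in> Xset m \<Longrightarrow> z \<in> Xset m \<Longrightarrow>
  BM m (key m y z) y0 z0 = (if y0 \<in> Xset m \<and> z0 \<in> Xset m \<and> key m y0 z0 = key m y z then 1 else 0)"
  unfolding BM_def key_def blockmat_def Xrel_def ksub_def Xset_def by auto

lemma BM_Kset: "k \<in> Kset m \<Longrightarrow>
  BM m k y0 z0 = (if y0 \<in> Xset m \<and> z0 \<in> Xset m \<and> key m y0 z0 = k then 1 else 0)"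
  using rep_prop[of k m] BM_key[of "fst (rep m k)" m "snd (rep m k)" y0 z0] by auto

lemma sum_apply2: "(sum F A) y z = (\<Sum>k\<in>A. F k y z)"
  by (induction A rule: infinite_finite_induct) auto

lemma key_in_Kset: "y \<in> Xset m \<Longrightarrow> z \<in> Xset m \<Longrightarrow> key m y z \<in> Kset m"
  unfolding Kset_def by force

lemma decomp:
  assumes "invm m M"
  shows "M = (\<Sum>k\<in>Kset m. cscale (M (fst (rep m k)) (snd (rep m k))) (BM m k))"
proof (intro ext)
  fix y0 z0
  show "M y0 z0 = (\<Sum>k\<in>Kset m. cscale (M (fst (rep m k)) (snd (rep m k))) (BM m k)) y0 z0"
  proof (cases "y0 \<in> Xset m \<and> z0 \<in> Xset m")
    case True
    have "(\<Sum>k\<in>Kset m. cscale (M (fst (rep m k)) (snd (rep m k))) (BM m k)) y0 z0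
        = (\<Sum>k\<in>Kset m. if key m y0 z0 = k then M (fst (rep m k)) (snd (rep m k)) else 0)"
      unfolding sum_apply2 cscale_def using True by (intro sum.cong) (auto simp: BM_Kset)
    also have "\<dots> = M (fst (rep m (key m y0 z0))) (snd (rep m (key m y0 z0)))"
      using Kset_fin key_in_Kset[of y0 m z0] True by simp
    also have "\<dots> = M y0 z0"
    proof -
      have inv2: "\<And>y z y' z'. y \<in> Xset m \<Longrightarrow> z \<in> Xset m \<Longrightarrow> y' \<in> Xset m \<Longrightarrow> z' \<in> Xset m \<Longrightarrow>
        key m y z = key m y' z' \<Longrightarrow> M y z = M y' z'" using assms unfolding invm_def by blast
      show ?thesis using rep_prop[OF key_in_Kset[of y0 m z0]] True by (intro inv2) auto
    qed
    finally show ?thesis by simp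
  next
    case False
    have "M y0 z0 = 0" using assms False unfolding invm_def by blast
    moreover have "(\<Sum>k\<in>Kset m. cscale (M (fst (rep m k)) (snd (rep m k))) (BM m k)) y0 z0 = 0"
      unfolding sum_apply2 cscale_def by (rule sum.neutral) (use False in \<open>auto simp: BM_Kset\<close>)
    ultimately show ?thesis by simp
  qed
qed

lemma class_bij:
  assumes fA: "finite A" and fB: "finite B" and c: "\<And>k. card {a\<in>A. f a = k} = card {b\<in>B. g b = k}"
  shows "\<exists>\<sigma>. bij_betw \<sigma> A B \<and> (\<forall>a\<in>A. g (\<sigma> a) = f a)"
proof -
  have "\<forall>k. \<exists>h. bij_betw h {a\<in>A. f a = k} {b\<in>B. g b = k}"
  proof
    fix k show "\<exists>h. bij_betw h {a\<in>A. f a = k} {b\<in>B. g b = k}"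
      by (rule finite_same_card_bij) (use fA fB c in auto)
  qed
  then obtain h where h: "\<And>k. bij_betw (h k) {a\<in>A. f a = k} {b\<in>B. g b = k}" by metis
  define \<sigma> where "\<sigma> a = h (f a) a" for a
  have img: "\<sigma> a \<in> B \<and> g (\<sigma> a) = f a" if "a \<in> A" for a
    using bij_betwE[OF h[of "f a"]] that by (auto simp: \<sigma>_def)
  have inj: "inj_on \<sigma> A"
  proof (rule inj_onI)
    fix a1 a2 assume a: "a1 \<in> A" "a2 \<in> A" "\<sigma> a1 = \<sigma> a2"
    then have fe: "f a1 = f a2" using img by metis
    have "h (f a1) a1 = h (f a1) a2" using a fe by (simp add: \<sigma>_def)
    then show "a1 = a2" using bij_betw_imp_inj_on[OF h[of "f a1"]] a fe by (auto simp: inj_on_def)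
  qed
  have "B \<subseteq> \<sigma> ` A"
  proof
    fix b assume b: "b \<in> B"
    then have "b \<in> h (g b) ` {a\<in>A. f a = g b}" using bij_betw_imp_surj_on[OF h[of "g b"]] by auto
    then obtain a where "a \<in> A" "f a = g b" "b = h (g b) a" by auto
    then have "b = \<sigma> a" "a \<in> A" by (auto simp: \<sigma>_def)
    then show "b \<in> \<sigma> ` A" by blast
  qed
  then have "\<sigma> ` A = B" using img by auto
  then show ?thesis using inj img by (auto simp: bij_betw_def)
qed

definition r4 :: "nat \<Rightarrow> nat \<Rightarrow> nat \<Rightarrow> nat \<Rightarrow> bool \<times> bool \<Rightarrow> nat" where
  "r4 w u v i k = (case k of (True, True) \<Rightarrow> i | (True, False) \<Rightarrow> u - i | (False, True) \<Rightarrow> v - i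
                    | (False, False) \<Rightarrow> w + i - u - v)"

lemma region4:
  assumes fW: "finite W" and U: "U \<subseteq> W" and V: "V \<subseteq> W"
  shows "card {s\<in>W. (s \<in> U, s \<in> V) = k} = r4 (card W) (card U) (card V) (card (U \<inter> V)) k"
proof -
  have fU: "finite U" and fV: "finite V" using fW U V finite_subset by auto
  obtain a b where k: "k = (a, b)" by (cases k)
  show ?thesis
  proof (cases a; cases b)
    assume "a" "b"
    then have "{s\<in>W. (s \<in> U, s \<in> V) = k} = U \<inter> V" using k U by auto
    then show ?thesis using \<open>a\<close> \<open>b\<close> k by (simp add: r4_def)
  next
    assume "a" "\<not> b"
    then have "{s\<in>W. (s \<in> U, s \<in> V) = k} = U - V" using k U by auto
    then show ?thesis using \<open>a\<close> \<open>\<not> b\<close> k fU by (simp add: r4_def card_Diff_subset_Int)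
  next
    assume "\<not> a" "b"
    then have "{s\<in>W. (s \<in> U, s \<in> V) = k} = V - U" using k V by auto
    then show ?thesis using \<open>\<not> a\<close> \<open>b\<close> k fV by (simp add: r4_def card_Diff_subset_Int Int_commute)
  next
    assume "\<not> a" "\<not> b"
    then have "{s\<in>W. (s \<in> U, s \<in> V) = k} = W - (U \<union> V)" using k by auto
    moreover have "card (W - (U \<union> V)) = card W - card (U \<union> V)"
      using card_Diff_subset[of "U \<union> V" W] fU fV U V by auto
    moreover have "card U + card V = card (U \<union> V) + card (U \<inter> V)" using card_Un_Int fU fV by blast
    moreover have "card (U \<union> V) \<le> card W" using card_mono[OF fW] U V by auto
    ultimately show ?thesis using \<open>\<not> a\<close> \<open>\<not> b\<close> k by (simp add: r4_def)
  qed
qed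

lemma transport:
  assumes y: "y \<in> Xset m" and z: "z \<in> Xset m" and y': "y' \<in> Xset m" and z': "z' \<in> Xset m"
    and kk: "key m y z = key m y' z'"
  shows "\<exists>\<sigma>. bij_betw \<sigma> (Sset m) (Sset m) \<and>
     (\<forall>s\<in>Sset m. (\<sigma> s \<in> x0 m) = (s \<in> x0 m) \<and> (\<sigma> s \<in> y') = (s \<in> y) \<and> (\<sigma> s \<in> z') = (s \<in> z))"
proof -
  let ?S = "Sset m" and ?x = "x0 m"
  have fy: "finite y" "finite z" "finite y'" "finite z'" using y z y' z' X_fin by auto
  have cy: "card y = card y'" "card z = card z'" and
       r1: "card (?x \<inter> y) = card (?x \<inter> y')" and r2: "card (?x \<inter> z) = card (?x \<inter> z')" and
       r3: "card (y \<inter> z) = card (y' \<inter> z')" and r4': "card (?x \<inter> y \<inter> z) = card (?x \<inter> y' \<inter> z')"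
    using kk by (auto simp: key_def rho_def)
  have "\<exists>\<sigma>. bij_betw \<sigma> ?x ?x \<and> (\<forall>a\<in>?x. (\<sigma> a \<in> y', \<sigma> a \<in> z') = (a \<in> y, a \<in> z))"
  proof (rule class_bij)
    fix k
    have e1: "{a\<in>?x. (a \<in> y, a \<in> z) = k} = {a\<in>?x. (a \<in> ?x \<inter> y, a \<in> ?x \<inter> z) = k}" by auto
    have e2: "{a\<in>?x. (a \<in> y', a \<in> z') = k} = {a\<in>?x. (a \<in> ?x \<inter> y', a \<in> ?x \<inter> z') = k}" by auto
    have i1: "?x \<inter> y \<inter> (?x \<inter> z) = ?x \<inter> y \<inter> z" "?x \<inter> y' \<inter> (?x \<inter> z') = ?x \<inter> y' \<inter> z'" by auto
    show "card {a\<in>?x. (a \<in> y, a \<in> z) = k} = card {a\<in>?x. (a \<in> y', a \<in> z') = k}"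
      unfolding e1 e2 by (subst region4, simp, blast, blast)+ (simp add: i1 r1 r2 r4')
  qed simp_all
  then obtain \<sigma>1 where s1: "bij_betw \<sigma>1 ?x ?x" "\<forall>a\<in>?x. (\<sigma>1 a \<in> y', \<sigma>1 a \<in> z') = (a \<in> y, a \<in> z)" by blast
  let ?O = "?S - ?x"
  have cd: "card (w - ?x) = card w - card (?x \<inter> w)" if "finite w" for w
    using card_Diff_subset_Int[of w ?x] that by (simp add: Int_commute)
  have "\<exists>\<sigma>. bij_betw \<sigma> ?O ?O \<and> (\<forall>a\<in>?O. (\<sigma> a \<in> y', \<sigma> a \<in> z') = (a \<in> y, a \<in> z))"
  proof (rule class_bij)
    fix k
    have e1: "{a\<in>?O. (a \<in> y, a \<in> z) = k} = {a\<in>?O. (a \<in> ?O \<inter> y, a \<in> ?O \<inter> z) = k}" by auto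
    have e2: "{a\<in>?O. (a \<in> y', a \<in> z') = k} = {a\<in>?O. (a \<in> ?O \<inter> y', a \<in> ?O \<inter> z') = k}" by auto
    have o1: "?O \<inter> y = y - ?x" "?O \<inter> z = z - ?x" "?O \<inter> y' = y' - ?x" "?O \<inter> z' = z' - ?x"
      using X_sub[OF y] X_sub[OF z] X_sub[OF y'] X_sub[OF z'] by auto
    have o2: "(y - ?x) \<inter> (z - ?x) = (y \<inter> z) - ?x" "(y' - ?x) \<inter> (z' - ?x) = (y' \<inter> z') - ?x"
      using X_sub[OF y] X_sub[OF z] X_sub[OF y'] X_sub[OF z'] by auto
    have o3: "?x \<inter> (y \<inter> z) = ?x \<inter> y \<inter> z" "?x \<inter> (y' \<inter> z') = ?x \<inter> y' \<inter> z'" by auto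
    show "card {a\<in>?O. (a \<in> y, a \<in> z) = k} = card {a\<in>?O. (a \<in> y', a \<in> z') = k}"
      unfolding e1 e2 by (subst region4, simp, blast, blast)+
        (simp add: o1 o2 cd fy o3 cy r1 r2 r3 r4')
  qed simp_all
  then obtain \<sigma>2 where s2: "bij_betw \<sigma>2 ?O ?O" "\<forall>a\<in>?O. (\<sigma>2 a \<in> y', \<sigma>2 a \<in> z') = (a \<in> y, a \<in> z)" by blast
  define \<sigma> where "\<sigma> a = (if a \<in> ?x then \<sigma>1 a else \<sigma>2 a)" for a
  have b1: "bij_betw \<sigma> ?x ?x" using s1(1) by (rule bij_betw_cong[THEN iffD1, rotated]) (simp add: \<sigma>_def)
  have b2: "bij_betw \<sigma> ?O ?O" using s2(1) by (rule bij_betw_cong[THEN iffD1, rotated]) (simp add: \<sigma>_def)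
  have "bij_betw \<sigma> (?x \<union> ?O) (?x \<union> ?O)" by (rule bij_betw_combine[OF b1 b2]) auto
  moreover have "?x \<union> ?O = ?S" using x0_sub by auto
  ultimately have bs: "bij_betw \<sigma> ?S ?S" by simp
  have "\<forall>s\<in>?S. (\<sigma> s \<in> ?x) = (s \<in> ?x) \<and> (\<sigma> s \<in> y') = (s \<in> y) \<and> (\<sigma> s \<in> z') = (s \<in> z)"
  proof
    fix s assume s: "s \<in> ?S"
    show "(\<sigma> s \<in> ?x) = (s \<in> ?x) \<and> (\<sigma> s \<in> y') = (s \<in> y) \<and> (\<sigma> s \<in> z') = (s \<in> z)"
    proof (cases "s \<in> ?x")
      case True
      then show ?thesis using s1 bij_betwE[OF s1(1)] by (auto simp: \<sigma>_def)
    next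
      case False
      then have "s \<in> ?O" using s by auto
      then show ?thesis using False s2 bij_betwE[OF s2(1)] by (auto simp: \<sigma>_def)
    qed
  qed
  then show ?thesis using bs by blast
qed



lemma invD: "invm m M \<Longrightarrow> y \<in> Xset m \<Longrightarrow> z \<in> Xset m \<Longrightarrow> y' \<in> Xset m \<Longrightarrow> z' \<in> Xset m \<Longrightarrow>
   key m y z = key m y' z' \<Longrightarrow> M y z = M y' z'"
  unfolding invm_def by blast

lemma invD0: "invm m M \<Longrightarrow> y \<notin> Xset m \<or> z \<notin> Xset m \<Longrightarrow> M y z = 0"
  unfolding invm_def by blast

lemma invI: "(\<And>y z. y \<notin> Xset m \<or> z \<notin> Xset m \<Longrightarrow> M y z = 0) \<Longrightarrow>
  (\<And>y z y' z'. y \<in> Xset m \<Longrightarrow> z \<in> Xset m \<Longrightarrow> y' \<in> Xset m \<Longrightarrow> z' \<in> Xset m \<Longrightarrow>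
   key m y z = key m y' z' \<Longrightarrow> M y z = M y' z') \<Longrightarrow> invm m M"
  unfolding invm_def by blast

lemma img_eq: "bij_betw \<sigma> S S \<Longrightarrow> P \<subseteq> S \<Longrightarrow> P' \<subseteq> S \<Longrightarrow> \<forall>s\<in>S. (\<sigma> s \<in> P') = (s \<in> P) \<Longrightarrow> \<sigma> ` P = P'"
proof -
  assume b: "bij_betw \<sigma> S S" and P: "P \<subseteq> S" "P' \<subseteq> S" and e: "\<forall>s\<in>S. (\<sigma> s \<in> P') = (s \<in> P)"
  show ?thesis
  proof
    show "\<sigma> ` P \<subseteq> P'" using e P by auto
    show "P' \<subseteq> \<sigma> ` P"
    proof
      fix s' assume s': "s' \<in> P'"
      then have "s' \<in> \<sigma> ` S" using b P by (auto simp: bij_betw_def)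
      then obtain s where "s \<in> S" "s' = \<sigma> s" by auto
      then show "s' \<in> \<sigma> ` P" using e s' by auto
    qed
  qed
qed

lemma key_image:
  assumes b: "bij_betw \<sigma> (Sset m) (Sset m)" and x: "\<sigma> ` x0 m = x0 m"
    and a: "a \<subseteq> Sset m" and c: "c \<subseteq> Sset m"
  shows "key m (\<sigma> ` a) (\<sigma> ` c) = key m a c"
proof -
  have i: "inj_on \<sigma> (Sset m)" using b by (simp add: bij_betw_def)
  have ca: "card (\<sigma> ` A) = card A" if "A \<subseteq> Sset m" for A
    using card_image[OF inj_on_subset[OF i that]] .
  have "x0 m \<inter> \<sigma> ` a = \<sigma> ` (x0 m \<inter> a)" using inj_on_image_Int[OF i x0_sub a] x by simp
  moreover have "x0 m \<inter> \<sigma> ` c = \<sigma> ` (x0 m \<inter> c)" using inj_on_image_Int[OF i x0_sub c] x by simp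
  moreover have "\<sigma> ` a \<inter> \<sigma> ` c = \<sigma> ` (a \<inter> c)" using inj_on_image_Int[OF i a c] by simp
  moreover have "x0 m \<inter> \<sigma> ` a \<inter> \<sigma> ` c = \<sigma> ` (x0 m \<inter> a \<inter> c)"
    using inj_on_image_Int[OF i _ c, of "x0 m \<inter> a"] inj_on_image_Int[OF i x0_sub a] x a by auto
  moreover have "card (\<sigma> ` a) = card a" "card (\<sigma> ` c) = card c" using ca a c by auto
  moreover have "card (\<sigma> ` (x0 m \<inter> a)) = card (x0 m \<inter> a)" by (rule ca) (use a in auto)
  moreover have "card (\<sigma> ` (x0 m \<inter> c)) = card (x0 m \<inter> c)" by (rule ca) (use c in auto)
  moreover have "card (\<sigma> ` (a \<inter> c)) = card (a \<inter> c)" by (rule ca) (use a in auto)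
  moreover have "card (\<sigma> ` (x0 m \<inter> a \<inter> c)) = card (x0 m \<inter> a \<inter> c)" by (rule ca) (use a in auto)
  ultimately show ?thesis unfolding key_def rho_def by simp
qed

lemma phi_bij:
  assumes b: "bij_betw \<sigma> (Sset m) (Sset m)"
  shows "bij_betw (\<lambda>w. \<sigma> ` w) (Xset m) (Xset m)"
proof -
  have i: "inj_on \<sigma> (Sset m)" using b by (simp add: bij_betw_def)
  have into: "(\<lambda>w. \<sigma> ` w) ` Xset m \<subseteq> Xset m"
  proof
    fix w' assume "w' \<in> (\<lambda>w. \<sigma> ` w) ` Xset m"
    then obtain w where w: "w \<in> Xset m" "w' = \<sigma> ` w" by auto
    have "card (\<sigma> ` w) = card w" using card_image[OF inj_on_subset[OF i X_sub[OF w(1)]]] .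
    moreover have "\<sigma> ` w \<subseteq> Sset m" using X_sub[OF w(1)] b by (auto simp: bij_betw_def)
    ultimately show "w' \<in> Xset m" using w X_card[OF w(1)] by (auto simp: Xset_def)
  qed
  have inj: "inj_on (\<lambda>w. \<sigma> ` w) (Xset m)"
  proof (rule inj_onI)
    fix w1 w2 assume "w1 \<in> Xset m" "w2 \<in> Xset m" "\<sigma> ` w1 = \<sigma> ` w2"
    then show "w1 = w2" using inj_on_image_eq_iff[OF i X_sub X_sub] by blast
  qed
  have "(\<lambda>w. \<sigma> ` w) ` Xset m = Xset m" using endo_inj_surj[OF Xset_fin into inj] .
  then show ?thesis using inj by (simp add: bij_betw_def)
qed

lemma inv_mult:
  assumes M: "invm m M" and N: "invm m N"
  shows "invm m (mmult m M N)"
proof (rule invI)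
  fix y z assume h: "y \<notin> Xset m \<or> z \<notin> Xset m"
  have "M y w * N w z = 0" for w
  proof (cases "y \<in> Xset m")
    case True
    then have "N w z = 0" using h invD0[OF N, of w z] by blast
    then show ?thesis by simp
  next
    case False
    then have "M y w = 0" using invD0[OF M, of y w] by blast
    then show ?thesis by simp
  qed
  then show "mmult m M N y z = 0" unfolding mmult_def by (intro sum.neutral) blast
next
  fix y z y' z' assume y: "y \<in> Xset m" and z: "z \<in> Xset m" and y': "y' \<in> Xset m" and z': "z' \<in> Xset m"
    and k: "key m y z = key m y' z'"
  obtain \<sigma> where b: "bij_betw \<sigma> (Sset m) (Sset m)" and
    p: "\<forall>s\<in>Sset m. (\<sigma> s \<in> x0 m) = (s \<in> x0 m) \<and> (\<sigma> s \<in> y') = (s \<in> y) \<and> (\<sigma> s \<in> z') = (s \<in> z)"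
    using transport[OF y z y' z' k] by blast
  have sx: "\<sigma> ` x0 m = x0 m" using img_eq[OF b x0_sub x0_sub] p by blast
  have sy: "\<sigma> ` y = y'" using img_eq[OF b X_sub[OF y] X_sub[OF y']] p by blast
  have sz: "\<sigma> ` z = z'" using img_eq[OF b X_sub[OF z] X_sub[OF z']] p by blast
  have pb: "bij_betw (\<lambda>w. \<sigma> ` w) (Xset m) (Xset m)" using phi_bij[OF b] .
  have "mmult m M N y' z' = (\<Sum>w\<in>Xset m. M y' (\<sigma> ` w) * N (\<sigma> ` w) z')"
    unfolding mmult_def using sum.reindex_bij_betw[OF pb, of "\<lambda>w. M y' w * N w z'"] by simp
  also have "\<dots> = (\<Sum>w\<in>Xset m. M y w * N w z)"
  proof (rule sum.cong)
    fix w assume w: "w \<in> Xset m"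
    have sw: "\<sigma> ` w \<in> Xset m" using bij_betwE[OF pb] w by blast
    have "M y' (\<sigma> ` w) = M y w"
      using invD[OF M y' sw y w] key_image[OF b sx X_sub[OF y] X_sub[OF w]] sy by simp
    moreover have "N (\<sigma> ` w) z' = N w z"
      using invD[OF N sw z' w z] key_image[OF b sx X_sub[OF w] X_sub[OF z]] sz by simp
    ultimately show "M y' (\<sigma> ` w) * N (\<sigma> ` w) z' = M y w * N w z" by simp
  qed simp
  finally show "mmult m M N y z = mmult m M N y' z'" by (simp add: mmult_def)
qed

lemma inv_add: assumes M: "invm m M" and N: "invm m N" shows "invm m (M + N)"
proof (rule invI)
  fix y z assume "y \<notin> Xset m \<or> z \<notin> Xset m"
  then show "(M + N) y z = 0" using invD0[OF M] invD0[OF N] by simp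
next
  fix y z y' z' assume a: "y \<in> Xset m" "z \<in> Xset m" "y' \<in> Xset m" "z' \<in> Xset m" "key m y z = key m y' z'"
  show "(M + N) y z = (M + N) y' z'" using invD[OF M a] invD[OF N a] by simp
qed

lemma inv_scale: assumes M: "invm m M" shows "invm m (cscale c M)"
proof (rule invI)
  fix y z assume "y \<notin> Xset m \<or> z \<notin> Xset m"
  then show "cscale c M y z = 0" using invD0[OF M] by (simp add: cscale_def)
next
  fix y z y' z' assume a: "y \<in> Xset m" "z \<in> Xset m" "y' \<in> Xset m" "z' \<in> Xset m" "key m y z = key m y' z'"
  show "cscale c M y z = cscale c M y' z'" using invD[OF M a] by (simp add: cscale_def)
qed

lemma eq_card: "finite y \<Longrightarrow> finite z \<Longrightarrow> (y = z) \<longleftrightarrow> card (y \<inter> z) = card y \<and> card (y \<inter> z) = card z"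
  by (metis Int_lower1 Int_lower2 card_subset_eq inf.idem)

lemma sub_card: "finite y \<Longrightarrow> (y \<subseteq> z) \<longleftrightarrow> card (y \<inter> z) = card y"
  by (metis Int_lower1 card_subset_eq inf.absorb_iff1 inf.orderE)

lemma key_parts: "key m y z = key m y' z' \<Longrightarrow> card y = card y' \<and> card z = card z' \<and>
   card (x0 m \<inter> y) = card (x0 m \<inter> y') \<and> card (x0 m \<inter> z) = card (x0 m \<inter> z') \<and>
   card (y \<inter> z) = card (y' \<inter> z') \<and> card (x0 m \<inter> y \<inter> z) = card (x0 m \<inter> y' \<inter> z')"
  by (simp add: key_def rho_def)

lemma key_eq_iff: "y \<in> Xset m \<Longrightarrow> z \<in> Xset m \<Longrightarrow> y' \<in> Xset m \<Longrightarrow> z' \<in> Xset m \<Longrightarrow>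
  key m y z = key m y' z' \<Longrightarrow> (y = z) = (y' = z')"
  using eq_card[of y z] eq_card[of y' z'] key_parts[of m y z y' z'] X_fin by metis

lemma inv_id: "invm m (idmat m)"
  unfolding idmat_def
proof (rule invI)
  fix y z y' z' assume a: "y \<in> Xset m" "z \<in> Xset m" "y' \<in> Xset m" "z' \<in> Xset m" "key m y z = key m y' z'"
  show "(if y \<in> Xset m \<and> y = z then 1 else 0) = (if y' \<in> Xset m \<and> y' = z' then 1 else (0::complex))"
    using key_eq_iff[OF a] a by simp
qed auto

lemma adj_card: "y \<in> Xset m \<Longrightarrow> z \<in> Xset m \<Longrightarrow> adj m y z \<longleftrightarrow>
   (card (y \<inter> z) = card y \<and> card y < card z) \<or> (card (y \<inter> z) = card z \<and> card z < card y)"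
proof -
  assume y: "y \<in> Xset m" and z: "z \<in> Xset m"
  have fy: "finite y" "finite z" using X_fin y z by auto
  have "y \<subset> z \<longleftrightarrow> y \<subseteq> z \<and> card y < card z"
    using psubset_card_mono[OF fy(2)] by auto
  moreover have "z \<subset> y \<longleftrightarrow> z \<subseteq> y \<and> card z < card y"
    using psubset_card_mono[OF fy(1)] by auto
  ultimately show ?thesis using sub_card[OF fy(1), of z] sub_card[OF fy(2), of y] y z
    by (simp add: adj_def Int_commute)
qed

lemma inv_A: "invm m (A1 m)"
  unfolding A1_def
proof (rule invI)
  fix y z assume "y \<notin> Xset m \<or> z \<notin> Xset m"
  then show "(if adj m y z then 1 else 0) = (0::complex)" by (auto simp: adj_def)
next
  fix y z y' z' assume a: "y \<in> Xset m" "z \<in> Xset m" "y' \<in> Xset m" "z' \<in> Xset m" "key m y z = key m y' z'"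
  show "(if adj m y z then 1 else 0) = (if adj m y' z' then 1 else (0::complex))"
    using adj_card[OF a(1,2)] adj_card[OF a(3,4)] key_parts[OF a(5)] by simp
qed

lemma dd_x0: "y \<in> Xset m \<Longrightarrow> dd (x0 m) y + 2 * card (x0 m \<inter> y) = m + card y"
  using dd_formula[of "x0 m" y] X_fin by simp

lemma inv_E: "invm m (Estar m i)"
  unfolding Estar_dd
proof (rule invI)
  fix y z y' z' assume a: "y \<in> Xset m" "z \<in> Xset m" "y' \<in> Xset m" "z' \<in> Xset m" "key m y z = key m y' z'"
  have "dd (x0 m) y = dd (x0 m) y'" using dd_x0[OF a(1)] dd_x0[OF a(3)] key_parts[OF a(5)] by linarith
  then show "(if y \<in> Xset m \<and> y = z \<and> dd (x0 m) y = i then 1 else 0) =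
        (if y' \<in> Xset m \<and> y' = z' \<and> dd (x0 m) y' = i then 1 else (0::complex))"
    using key_eq_iff[OF a] a by simp
qed auto

lemma Talg_inv: "A \<in> Talg m \<Longrightarrow> invm m A"
proof (induction rule: Talg.induct)
  case (add A B) then show ?case using inv_add by blast
qed (auto intro: inv_id inv_A inv_E inv_scale inv_mult)



definition stepF :: "nat \<Rightarrow> kty \<Rightarrow> nat \<Rightarrow> kty" where
  "stepF m k l = (case k of (p, q, i, j, t, r) \<Rightarrow>
     if q = m then (let e = (if l + 1 + 2 * j = m + q then 1 else 0) in (p, m + 1, i, j + e, t, r))
     else (let e = (if l + 2 * j = m + q + 1 then 1 else 0) in (p, m, i, j - e, t - 1, r - e)))"

lemma step_key:
  assumes a: "a \<in> Xset m" and u: "u \<in> Xset m" and v: "v \<in> Xset m" and ad: "adj m u v"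
    and d: "dd a v = dd a u + 1"
  shows "key m a v = stepF m (key m a u) (dd (x0 m) v)"
proof -
  have fa: "finite a" and fu: "finite u" using a u X_fin by auto
  have du: "dd (x0 m) u + 2 * card (x0 m \<inter> u) = m + card u" using dd_x0[OF u] .
  from adj_cases[OF ad] show ?thesis
  proof
    assume "\<exists>b. b \<notin> u \<and> v = insert b u \<and> card u = m \<and> b \<in> Sset m"
    then obtain b where b: "b \<notin> u" "v = insert b u" "card u = m" by blast
    have ba: "b \<notin> a" using dd_insert_in[OF fa fu b(1)] d b(2) by auto
    show ?thesis
    proof (cases "b \<in> x0 m")
      case True
      have "dd (x0 m) v + 1 = dd (x0 m) u" using dd_insert_in[OF x0_fin fu b(1) True] b(2) by simp
      then have e: "dd (x0 m) v + 1 + 2 * card (x0 m \<inter> u) = m + card u" using du by simp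
      show ?thesis using True ba b fu e unfolding key_def rho_def stepF_def
        by (simp add: Int_insert_right card_insert_if Let_def Int_assoc)
    next
      case False
      have "dd (x0 m) v = dd (x0 m) u + 1" using dd_insert_out[OF x0_fin fu b(1) False] b(2) by simp
      then have e: "dd (x0 m) v + 1 + 2 * card (x0 m \<inter> u) \<noteq> m + card u" using du by simp
      show ?thesis using False ba b fu e unfolding key_def rho_def stepF_def
        by (simp add: Int_insert_right card_insert_if Let_def Int_assoc)
    qed
  next
    assume "\<exists>b. b \<in> u \<and> v = u - {b} \<and> card u = m + 1"
    then obtain b where b: "b \<in> u" "v = u - {b}" "card u = m + 1" by blast
    have ba: "b \<in> a" using dd_remove_out[OF fa fu b(1)] d b(2) by auto
    have i1: "x0 m \<inter> (u - {b}) = (x0 m \<inter> u) - {b}" "a \<inter> (u - {b}) = (a \<inter> u) - {b}"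
      "x0 m \<inter> a \<inter> (u - {b}) = (x0 m \<inter> a \<inter> u) - {b}" by auto
    show ?thesis
    proof (cases "b \<in> x0 m")
      case True
      have "dd (x0 m) v = dd (x0 m) u + 1" using dd_remove_in[OF x0_fin fu b(1) True] b(2) by simp
      then have e: "dd (x0 m) v + 2 * card (x0 m \<inter> u) = m + card u + 1" using du by simp
      show ?thesis using True ba b fu e unfolding key_def rho_def stepF_def
        by (simp add: i1 card_Diff_singleton_if Let_def)
    next
      case False
      have "dd (x0 m) v + 1 = dd (x0 m) u" using dd_remove_out[OF x0_fin fu b(1) False] b(2) by simp
      then have e: "dd (x0 m) v + 2 * card (x0 m \<inter> u) \<noteq> m + card u + 1" using du by simp
      show ?thesis using False ba b fu e unfolding key_def rho_def stepF_def
        by (simp add: i1 card_Diff_singleton_if Let_def)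
    qed
  qed
qed



lemma cscale0: "cscale 0 M = 0" by (simp add: cscale_def fun_eq_iff)

lemma Talg_zero: "0 \<in> Talg m"
proof -
  have "cscale 0 (idmat m) \<in> Talg m" by (rule Talg.scale[OF Talg.gen_id])
  then show ?thesis by (simp add: cscale0)
qed

lemma Talg_sum: "finite A \<Longrightarrow> (\<And>a. a \<in> A \<Longrightarrow> f a \<in> Talg m) \<Longrightarrow> sum f A \<in> Talg m"
  by (induction A rule: finite_induct) (auto intro: Talg_zero Talg.add)

lemma inv_BM: "y \<in> Xset m \<Longrightarrow> z \<in> Xset m \<Longrightarrow> invm m (BM m (key m y z))"
  by (rule invI) (auto simp: BM_key)

lemma dd_key: "y \<in> Xset m \<Longrightarrow> z \<in> Xset m \<Longrightarrow> y' \<in> Xset m \<Longrightarrow> z' \<in> Xset m \<Longrightarrow>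
  key m y z = key m y' z' \<Longrightarrow> dd y z = dd y' z'"
  using dd_formula[of y z] dd_formula[of y' z'] key_parts[of m y z y' z'] X_fin
  by (metis add_right_imp_eq)

lemma decomp_Talg:
  assumes M: "invm m M"
    and h: "\<And>y z. y \<in> Xset m \<Longrightarrow> z \<in> Xset m \<Longrightarrow> M y z \<noteq> 0 \<Longrightarrow> BM m (key m y z) \<in> Talg m"
  shows "M \<in> Talg m"
proof -
  have "(\<Sum>k\<in>Kset m. cscale (M (fst (rep m k)) (snd (rep m k))) (BM m k)) \<in> Talg m"
  proof (rule Talg_sum[OF Kset_fin])
    fix k assume k: "k \<in> Kset m"
    obtain y z where yz: "rep m k = (y, z)" by (cases "rep m k")
    have p: "y \<in> Xset m" "z \<in> Xset m" "key m y z = k" using rep_prop[OF k] yz by auto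
    show "cscale (M (fst (rep m k)) (snd (rep m k))) (BM m k) \<in> Talg m"
    proof (cases "M y z = 0")
      case True
      then show ?thesis using yz by (simp add: cscale0 Talg_zero)
    next
      case False
      then have "BM m k \<in> Talg m" using h[OF p(1,2)] p(3) by simp
      then show ?thesis by (rule Talg.scale)
    qed
  qed
  then show ?thesis using decomp[OF M] by simp
qed

lemma mmult_E: "mmult m N (Estar m d) y z = (if z \<in> Xset m \<and> dd (x0 m) z = d then N y z else 0)"
proof (cases "z \<in> Xset m")
  case True
  have "mmult m N (Estar m d) y z = (\<Sum>w\<in>Xset m. if w = z then (if dd (x0 m) z = d then N y z else 0) else 0)"
    unfolding mmult_def Estar_dd by (rule sum.cong) auto
  also have "\<dots> = (if dd (x0 m) z = d then N y z else 0)" using True Xset_fin by simp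
  finally show ?thesis using True by simp
next
  case False
  then show ?thesis unfolding mmult_def Estar_dd by (auto intro!: sum.neutral)
qed

lemma arith_aux: "(a::nat) = m \<or> a = m + 1 \<Longrightarrow> b = m \<or> b = m + 1 \<Longrightarrow> d + 2 * p = m + a \<Longrightarrow>
   d + 2 * q = m + b \<Longrightarrow> a = b \<and> p = q"
  by presburger

lemma base_case: assumes y: "y \<in> Xset m" shows "BM m (key m y y) = Estar m (dd (x0 m) y)"
proof (intro ext)
  fix y0 z0
  have fy: "finite y" using X_fin y by auto
  show "BM m (key m y y) y0 z0 = Estar m (dd (x0 m) y) y0 z0"
  proof (cases "y0 \<in> Xset m \<and> z0 \<in> Xset m")
    case True
    have "key m y0 z0 = key m y y \<longleftrightarrow> y0 = z0 \<and> dd (x0 m) y0 = dd (x0 m) y"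
    proof
      assume k: "key m y0 z0 = key m y y"
      then have "y0 = z0" using key_eq_iff[of y0 m z0 y y] True y by simp
      then show "y0 = z0 \<and> dd (x0 m) y0 = dd (x0 m) y"
        using dd_x0[of y0 m] dd_x0[OF y] key_parts[OF k] True by simp
    next
      assume e: "y0 = z0 \<and> dd (x0 m) y0 = dd (x0 m) y"
      have c1: "card y0 = m \<or> card y0 = m + 1" "card y = m \<or> card y = m + 1"
        using X_card True y by auto
      have d1: "dd (x0 m) y0 + 2 * card (x0 m \<inter> y0) = m + card y0" using dd_x0 True by blast
      have d2: "dd (x0 m) y + 2 * card (x0 m \<inter> y) = m + card y" using dd_x0 y by blast
      have d3: "dd (x0 m) y0 + 2 * card (x0 m \<inter> y) = m + card y" using d2 e[THEN conjunct2] by simp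
      have "card y0 = card y \<and> card (x0 m \<inter> y0) = card (x0 m \<inter> y)" using arith_aux[OF c1 d1 d3] .
      then show "key m y0 z0 = key m y y" using e by (simp add: key_def rho_def)
    qed
    then show ?thesis using True y by (simp add: BM_key Estar_dd)
  next
    case False
    then show ?thesis using y by (auto simp: BM_key Estar_dd)
  qed
qed

lemma dd_self: "dd y y = 0" by (simp add: dd_def)

lemma sum_ind: "finite A \<Longrightarrow> (\<Sum>u\<in>A. if P u then 1 else (0::complex)) = of_nat (card {u\<in>A. P u})"
  by (simp add: sum.If_cases Int_def conj_commute)

lemma main_ind: "y \<in> Xset m \<Longrightarrow> z \<in> Xset m \<Longrightarrow> dd y z \<le> n \<Longrightarrow> BM m (key m y z) \<in> Talg m"
proof (induction n arbitrary: y z)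
  case 0
  then have "y = z" using dd_zero[of y z] X_fin by auto
  moreover have "dd (x0 m) y \<le> 2 * m + 1" using dd_x0[of y m] X_card[of y m] 0 by auto
  ultimately show ?case using base_case[of y m] 0 by (simp add: Talg.gen_E)
next
  case (Suc n)
  note y = Suc.prems(1) and z = Suc.prems(2)
  show ?case
  proof (cases "dd y z \<le> n")
    case True
    then show ?thesis using Suc.IH y z by blast
  next
    case False
    then have dz: "dd y z = Suc n" using Suc.prems(3) by simp
    then have "z \<noteq> y" using dd_self[of y] by auto
    then obtain z' where z'a: "adj m z z'" and z'd: "dd y z' + 1 = dd y z"
      using step_toward[OF z y] by blast
    have z': "z' \<in> Xset m" using z'a by (simp add: adj_def)
    have z'z: "adj m z' z" using z'a by (auto simp: adj_def)
    have O': "BM m (key m y z') \<in> Talg m" using Suc.IH[OF y z'] z'd dz by simp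
    define W where "W = mmult m (mmult m (BM m (key m y z')) (A1 m)) (Estar m (dd (x0 m) z))"
    have dzl: "dd (x0 m) z \<le> 2 * m + 1" using dd_x0[of z m] X_card[of z m] z by auto
    have WT: "W \<in> Talg m" unfolding W_def
      by (intro Talg.mult O' Talg.gen_A Talg.gen_E dzl)
    have Winv: "invm m W" using Talg_inv[OF WT] .
    have Wval: "W y0 z0 = (if dd (x0 m) z0 = dd (x0 m) z then
        (\<Sum>u\<in>Xset m. if key m y0 u = key m y z' \<and> adj m u z0 then 1 else 0) else 0)"
      if y0: "y0 \<in> Xset m" and z0: "z0 \<in> Xset m" for y0 z0
    proof -
      have "(\<Sum>u\<in>Xset m. BM m (key m y z') y0 u * A1 m u z0) =
            (\<Sum>u\<in>Xset m. if key m y0 u = key m y z' \<and> adj m u z0 then 1 else 0)"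
        by (rule sum.cong) (auto simp: BM_key[OF y z'] A1_def y0)
      then show ?thesis unfolding W_def mmult_E using z0 by (simp add: mmult_def)
    qed
    define c where "c = W y z"
    have "c = of_nat (card {u\<in>Xset m. key m y u = key m y z' \<and> adj m u z})"
      unfolding c_def using Wval[OF y z] sum_ind[OF Xset_fin] by simp
    moreover have "z' \<in> {u\<in>Xset m. key m y u = key m y z' \<and> adj m u z}" using z' z'z by simp
    then have "card {u\<in>Xset m. key m y u = key m y z' \<and> adj m u z} \<noteq> 0"
      using Xset_fin by (metis (no_types, lifting) card_0_eq empty_iff finite_subset mem_Collect_eq subsetI)
    ultimately have c0: "c \<noteq> 0" by simp
    define B where "B = BM m (key m y z)"
    define R where "R = W + cscale (-c) B"
    have Rinv: "invm m R" unfolding R_def B_def by (intro inv_add Winv inv_scale inv_BM y z)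
    have RT: "R \<in> Talg m"
    proof (rule decomp_Talg[OF Rinv])
      fix y0 z0 assume y0: "y0 \<in> Xset m" and z0: "z0 \<in> Xset m" and nz: "R y0 z0 \<noteq> 0"
      have "dd y0 z0 \<le> n"
      proof (rule ccontr)
        assume "\<not> dd y0 z0 \<le> n"
        then have big: "dd y0 z0 \<ge> Suc n" by simp
        have "R y0 z0 = 0"
        proof (cases "key m y0 z0 = key m y z")
          case True
          have "W y0 z0 = c" unfolding c_def using invD[OF Winv y0 z0 y z True] .
          moreover have "B y0 z0 = 1" unfolding B_def using BM_key[OF y z] y0 z0 True by simp
          ultimately show ?thesis unfolding R_def cscale_def by simp
        next
          case False
          have B0: "B y0 z0 = 0" unfolding B_def using BM_key[OF y z] False by simp
          have "W y0 z0 = 0"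
          proof (cases "dd (x0 m) z0 = dd (x0 m) z")
            case False
            then show ?thesis using Wval[OF y0 z0] by simp
          next
            case True
            have "(if key m y0 u = key m y z' \<and> adj m u z0 then 1 else 0) = (0::complex)"
              if u: "u \<in> Xset m" for u
            proof (rule ccontr)
              assume "(if key m y0 u = key m y z' \<and> adj m u z0 then 1 else 0) \<noteq> (0::complex)"
              then have ku: "key m y0 u = key m y z'" and au: "adj m u z0" by (auto split: if_splits)
              have "dd y0 u = dd y z'" using dd_key[OF y0 u y z' ku] .
              then have "dd y0 u = n" using z'd dz by simp
              then have e: "dd y0 z0 = dd y0 u + 1" using adj_dd_le[OF au, of y0] X_fin[OF y0] big by simp
              have "key m y0 z0 = stepF m (key m y0 u) (dd (x0 m) z0)" using step_key[OF y0 u z0 au e] .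
              also have "\<dots> = stepF m (key m y z') (dd (x0 m) z)" using ku True by simp
              also have "\<dots> = key m y z" using step_key[OF y z' z z'z] z'd by simp
              finally show False using False by simp
            qed
            then show ?thesis using Wval[OF y0 z0] True by simp
          qed
          then show ?thesis unfolding R_def cscale_def using B0 by simp
        qed
        then show False using nz by simp
      qed
      then show "BM m (key m y0 z0) \<in> Talg m" using Suc.IH[OF y0 z0] by blast
    qed
    have "B = cscale (1 / c) (W + cscale (-1) R)"
      unfolding R_def cscale_def using c0 by (simp add: fun_eq_iff)
    moreover have "cscale (1 / c) (W + cscale (-1) R) \<in> Talg m"
      by (intro Talg.scale Talg.add WT RT)
    ultimately show ?thesis unfolding B_def by simp
  qed
qed

lemma BM_Talg: "y \<in> Xset m \<Longrightarrow> z \<in> Xset m \<Longrightarrow> BM m (key m y z) \<in> Talg m"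
  using main_ind by blast



lemma module_cscale: "module cscale"
  by unfold_locales (simp_all add: cscale_def fun_eq_iff algebra_simps)

definition ab :: "nat \<Rightarrow> nat \<Rightarrow> nat \<times> nat" where
  "ab m k = (if k = 0 then (m, m) else if k = 1 then (m, m+1) else if k = 2 then (m+1, m) else (m+1, m+1))"

lemma bidx_char: "(k, q) \<in> bidx m \<Longrightarrow> k \<le> 3 \<and> q \<in> Iset m (fst (ab m k)) (snd (ab m k))
   \<and> bfam m (k, q) = blockmat m (fst (ab m k)) (snd (ab m k)) q"
  unfolding bidx_def bfam_def ab_def Mmat_def Rmat_def Lmat_def Fmat_def by auto

lemma Iset_wit: "q \<in> Iset m a b \<Longrightarrow> \<exists>y z. y \<in> ksub m a \<and> z \<in> ksub m b \<and> rho m y z = q"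
  unfolding Iset_def by blast

lemma ksub_X: "a = m \<or> a = m + 1 \<Longrightarrow> y \<in> ksub m a \<longleftrightarrow> y \<in> Xset m \<and> card y = a"
  unfolding ksub_def Xset_def by auto

lemma ab_cases: "k \<le> 3 \<Longrightarrow> (fst (ab m k) = m \<or> fst (ab m k) = m + 1) \<and> (snd (ab m k) = m \<or> snd (ab m k) = m + 1)"
  by (simp add: ab_def)

lemma ab_inj: "k \<le> 3 \<Longrightarrow> k' \<le> 3 \<Longrightarrow> ab m k = ab m k' \<Longrightarrow> k = k'"
  by (simp add: ab_def split: if_splits)

lemma bidx_wit: assumes "(k, q) \<in> bidx m"
  shows "\<exists>y z. y \<in> Xset m \<and> z \<in> Xset m \<and> key m y z = (fst (ab m k), snd (ab m k), q)
     \<and> bfam m (k, q) = BM m (key m y z)"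
proof -
  note c = bidx_char[OF assms]
  obtain y z where w: "y \<in> ksub m (fst (ab m k))" "z \<in> ksub m (snd (ab m k))" "rho m y z = q"
    using Iset_wit c by blast
  have "y \<in> Xset m" "card y = fst (ab m k)" "z \<in> Xset m" "card z = snd (ab m k)"
    using w(1,2) ksub_X ab_cases c by blast+
  then show ?thesis using w(3) c by (intro exI[of _ y] exI[of _ z]) (auto simp: key_def BM_def)
qed

lemma bfam_image: "bfam m ` bidx m = BM m ` Kset m"
proof
  show "bfam m ` bidx m \<subseteq> BM m ` Kset m"
  proof
    fix v assume "v \<in> bfam m ` bidx m"
    then obtain k q where kq: "(k, q) \<in> bidx m" "v = bfam m (k, q)" by auto
    then show "v \<in> BM m ` Kset m" using bidx_wit[OF kq(1)] key_in_Kset by fastforce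
  qed
next
  show "BM m ` Kset m \<subseteq> bfam m ` bidx m"
  proof
    fix v assume "v \<in> BM m ` Kset m"
    then obtain y z where yz: "y \<in> Xset m" "z \<in> Xset m" "v = BM m (key m y z)"
      unfolding Kset_def by auto
    have cy: "card y = m \<or> card y = m + 1" "card z = m \<or> card z = m + 1" using X_card yz by auto
    have ks: "y \<in> ksub m (card y)" "z \<in> ksub m (card z)" using yz X_sub by (auto simp: ksub_def)
    have I: "rho m y z \<in> Iset m (card y) (card z)" using ks unfolding Iset_def by blast
    have v: "v = blockmat m (card y) (card z) (rho m y z)" using yz by (simp add: BM_def key_def)
    show "v \<in> bfam m ` bidx m"
    proof -
      from cy consider "card y = m" "card z = m" | "card y = m" "card z = m+1"
        | "card y = m+1" "card z = m" | "card y = m+1" "card z = m+1" by blast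
      then show ?thesis
      proof cases
        case 1 then show ?thesis using I v
          by (intro image_eqI[of _ _ "(0, rho m y z)"]) (auto simp: bidx_def bfam_def Mmat_def)
      next
        case 2 then show ?thesis using I v
          by (intro image_eqI[of _ _ "(1, rho m y z)"]) (auto simp: bidx_def bfam_def Rmat_def)
      next
        case 3 then show ?thesis using I v
          by (intro image_eqI[of _ _ "(2, rho m y z)"]) (auto simp: bidx_def bfam_def Lmat_def)
      next
        case 4 then show ?thesis using I v
          by (intro image_eqI[of _ _ "(3, rho m y z)"]) (auto simp: bidx_def bfam_def Fmat_def)
      qed
    qed
  qed
qed

lemma bfam_inj: "inj_on (bfam m) (bidx m)"
proof (rule inj_onI)
  fix kq kq' assume a: "kq \<in> bidx m" "kq' \<in> bidx m" "bfam m kq = bfam m kq'"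
  obtain k q where kq: "kq = (k, q)" by (cases kq)
  obtain k' q' where kq': "kq' = (k', q')" by (cases kq')
  obtain y z where w: "y \<in> Xset m" "z \<in> Xset m" "key m y z = (fst (ab m k), snd (ab m k), q)"
      "bfam m (k, q) = BM m (key m y z)"
    using bidx_wit a(1) kq by blast
  obtain y' z' where w': "y' \<in> Xset m" "z' \<in> Xset m" "key m y' z' = (fst (ab m k'), snd (ab m k'), q')"
      "bfam m (k', q') = BM m (key m y' z')"
    using bidx_wit a(2) kq' by blast
  have "BM m (key m y z) y z = BM m (key m y' z') y z" using a(3) w(4) w'(4) kq kq' by simp
  then have "key m y z = key m y' z'" using BM_key[OF w(1,2)] BM_key[OF w'(1,2)] w by (simp split: if_splits)
  then have e: "ab m k = ab m k'" "q = q'" using w(3) w'(3) by (auto simp: prod_eq_iff)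
  have "k \<le> 3" "k' \<le> 3" using bidx_char a(1,2) kq kq' by blast+
  then show "kq = kq'" using ab_inj e kq kq' by blast
qed

theorem corollary4p12:
  fixes m :: nat
  assumes "m \<ge> 3"
  shows "inj_on (bfam m) (bidx m)
       \<and> \<not> module.dependent cscale (bfam m ` bidx m)
       \<and> module.span cscale (bfam m ` bidx m) = Talg m"
proof -
  interpret Mo: module cscale by (rule module_cscale)
  have indep: "\<not> Mo.dependent (BM m ` Kset m)"
  proof
    assume "Mo.dependent (BM m ` Kset m)"
    then obtain t u where t: "finite t" "t \<subseteq> BM m ` Kset m" "(\<Sum>v\<in>t. cscale (u v) v) = 0"
      and v0: "\<exists>v\<in>t. u v \<noteq> 0" unfolding Mo.dependent_explicit by blast
    then obtain v0 where v0t: "v0 \<in> t" and uv0: "u v0 \<noteq> 0" by blast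
    obtain k0 where k0: "k0 \<in> Kset m" "v0 = BM m k0" using v0t t(2) by blast
    obtain y z where yz: "rep m k0 = (y, z)" by (cases "rep m k0")
    have p: "y \<in> Xset m" "z \<in> Xset m" "key m y z = k0" using rep_prop[OF k0(1)] yz by auto
    have vv: "v y z = (if v = v0 then 1 else 0)" if vt: "v \<in> t" for v
    proof -
      obtain k where k: "k \<in> Kset m" "v = BM m k" using vt t(2) by blast
      show ?thesis
      proof (cases "k = k0")
        case True then show ?thesis using k k0 p by (simp add: BM_Kset)
      next
        case False
        then have "v \<noteq> v0 \<or> v = v0" by blast
        moreover have "v y z = 0" using False k p by (simp add: BM_Kset)
        moreover have "v0 y z = 1" using k0 p by (simp add: BM_Kset)
        ultimately show ?thesis by auto
      qed
    qed
    have "0 = (\<Sum>v\<in>t. cscale (u v) v) y z" using t(3) by simp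
    also have "\<dots> = (\<Sum>v\<in>t. u v * v y z)" unfolding sum_apply2 cscale_def by simp
    also have "\<dots> = (\<Sum>v\<in>t. if v = v0 then u v0 else 0)" by (rule sum.cong) (auto simp: vv)
    also have "\<dots> = u v0" using t(1) v0t by simp
    finally show False using uv0 by simp
  qed
  have sub: "Mo.subspace (Talg m)"
    by (rule Mo.subspaceI) (auto intro: Talg_zero Talg.add Talg.scale)
  have BMT: "BM m ` Kset m \<subseteq> Talg m"
  proof
    fix v assume "v \<in> BM m ` Kset m"
    then obtain y z where "y \<in> Xset m" "z \<in> Xset m" "v = BM m (key m y z)" unfolding Kset_def by auto
    then show "v \<in> Talg m" using BM_Talg by simp
  qed
  have sp: "Mo.span (BM m ` Kset m) = Talg m"
  proof
    show "Mo.span (BM m ` Kset m) \<subseteq> Talg m" by (rule Mo.span_minimal[OF BMT sub])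
    show "Talg m \<subseteq> Mo.span (BM m ` Kset m)"
    proof
      fix A assume "A \<in> Talg m"
      then have iA: "invm m A" by (rule Talg_inv)
      have "(\<Sum>k\<in>Kset m. cscale (A (fst (rep m k)) (snd (rep m k))) (BM m k)) \<in> Mo.span (BM m ` Kset m)"
        by (intro Mo.span_sum Mo.span_scale Mo.span_base) simp
      then show "A \<in> Mo.span (BM m ` Kset m)" using decomp[OF iA] by simp
    qed
  qed
  show ?thesis using bfam_inj indep sp bfam_image by simp
qed

end
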